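(* Let $p>3$ be a prime and let $x=r/m$, where $0<r<m$ are integers with $m$ prime to $p$. Then for every nonnegative integer $a$, $$\sum_{k=ap+1}^{ap+p-1} {(x)_{k}(1-x)_{k}\over (1)_k^2}\cdot{1\over k}\equiv {(x)_{ap}(1-x)_{ap}\over (1)^2_{ap}}\sum_{k=1}^{p-1}{(x)_{k}(1-x)_{k}\over (1)_k^2}\cdot{1\over ap+k}\pmod{p^2}.$$
   Context: $(y)_n=y(y+1)\cdots(y+n-1)$ denotes the Pochhammer symbol (with $(y)_0=1$). Congruences between rational numbers modulo $p^j$ mean that the difference is a rational number whose numerator is divisible by $p^j$ and whose denominator is prime to $p$. *)

theory Defs
  imports Complex_Main "HOL-Computational_Algebra.Primes"
begin

text \<open>For M = p^j with p prime this is the paper's notion.\<close>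
definition rat_cong :: "rat \<Rightarrow> rat \<Rightarrow> int \<Rightarrow> bool" where
  "rat_cong a b M \<longleftrightarrow>
     (case quotient_of (a - b) of (n, d) \<Rightarrow> M dvd n \<and> coprime d M)"

end

theory Submission
  imports Defs "HOL-Number_Theory.Number_Theory"
begin

definition pint :: "nat \<Rightarrow> rat \<Rightarrow> bool" where
  "pint p q \<longleftrightarrow> (\<exists>a b. coprime b (int p) \<and> q = of_int a / of_int b)"

definition pdv :: "nat \<Rightarrow> nat \<Rightarrow> rat \<Rightarrow> bool" where
  "pdv p k q \<longleftrightarrow> (\<exists>s. pint p s \<and> q = of_nat p ^ k * s)"

lemma coprime_nz: "prime p \<Longrightarrow> coprime b (int p) \<Longrightarrow> b \<noteq> 0"
  by auto

lemma pint_int: "pint p (of_int a)"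
  unfolding pint_def by (rule exI[of _ a], rule exI[of _ 1]) simp

lemma pint_nat: "pint p (of_nat n)"
  using pint_int[of p "int n"] by simp

lemma pint_0: "pint p 0" using pint_int[of p 0] by simp
lemma pint_1: "pint p 1" using pint_int[of p 1] by simp

lemma pint_add:
  assumes "prime p" "pint p x" "pint p y" shows "pint p (x + y)"
proof -
  obtain a b where ab: "coprime b (int p)" "x = of_int a / of_int b" using assms(2) pint_def by auto
  obtain c d where cd: "coprime d (int p)" "y = of_int c / of_int d" using assms(3) pint_def by auto
  have "b \<noteq> 0" "d \<noteq> 0" using coprime_nz assms(1) ab cd by auto
  then have "x + y = of_int (a*d + c*b) / of_int (b*d)" using ab cd by (simp add: field_simps)
  moreover have "coprime (b*d) (int p)" using ab cd by simp
  ultimately show ?thesis unfolding pint_def by blast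
qed

lemma pint_mult:
  assumes "prime p" "pint p x" "pint p y" shows "pint p (x * y)"
proof -
  obtain a b where ab: "coprime b (int p)" "x = of_int a / of_int b" using assms(2) pint_def by auto
  obtain c d where cd: "coprime d (int p)" "y = of_int c / of_int d" using assms(3) pint_def by auto
  have "x * y = of_int (a*c) / of_int (b*d)" using ab cd by simp
  moreover have "coprime (b*d) (int p)" using ab cd by simp
  ultimately show ?thesis unfolding pint_def by blast
qed

lemma pint_uminus: "pint p x \<Longrightarrow> pint p (- x)"
proof -
  assume "pint p x"
  then obtain a b where ab: "coprime b (int p)" "x = of_int a / of_int b" using pint_def by auto
  then have "- x = of_int (-a) / of_int b" by simp
  then show ?thesis using ab(1) unfolding pint_def by blast
qed

lemma pint_diff: "prime p \<Longrightarrow> pint p x \<Longrightarrow> pint p y \<Longrightarrow> pint p (x - y)"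
  using pint_add[of p x "-y"] pint_uminus[of p y] by simp

lemma pint_div:
  assumes "prime p" "pint p x" "coprime e (int p)" shows "pint p (x / of_int e)"
proof -
  obtain a b where ab: "coprime b (int p)" "x = of_int a / of_int b" using assms(2) pint_def by auto
  have "x / of_int e = of_int a / of_int (b*e)" using ab by simp
  moreover have "coprime (b*e) (int p)" using ab assms by simp
  ultimately show ?thesis unfolding pint_def by blast
qed

lemma pint_div_nat:
  assumes "prime p" "pint p x" "\<not> p dvd n" shows "pint p (x / of_nat n)"
proof -
  have "coprime (int n) (int p)" using assms(1,3)
    by (metis coprime_commute coprime_int_iff prime_imp_coprime_nat)
  then show ?thesis using pint_div[OF assms(1,2), of "int n"] by simp
qed

lemma pint_inv_nat: "prime p \<Longrightarrow> \<not> p dvd n \<Longrightarrow> pint p (1 / of_nat n)"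
  using pint_div_nat pint_1 by blast

lemma pint_sum: "prime p \<Longrightarrow> (\<And>i. i \<in> A \<Longrightarrow> pint p (f i)) \<Longrightarrow> pint p (sum f A)"
proof (induction A rule: infinite_finite_induct)
  case (infinite A) then show ?case by (simp add: pint_0)
next
  case empty then show ?case by (simp add: pint_0)
next
  case (insert x F) then show ?case by (simp add: pint_add)
qed

lemma pint_prod: "prime p \<Longrightarrow> (\<And>i. i \<in> A \<Longrightarrow> pint p (f i)) \<Longrightarrow> pint p (prod f A)"
proof (induction A rule: infinite_finite_induct)
  case (infinite A) then show ?case by (simp add: pint_1)
next
  case empty then show ?case by (simp add: pint_1)
next
  case (insert x F) then show ?case by (simp add: pint_mult)
qed

lemma pint_pow: "prime p \<Longrightarrow> pint p x \<Longrightarrow> pint p (x ^ n)"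
  by (induction n) (auto simp: pint_1 pint_mult)

lemma pint_poch: "prime p \<Longrightarrow> pint p x \<Longrightarrow> pint p (pochhammer x n)"
  unfolding pochhammer_prod by (rule pint_prod) (auto intro: pint_add pint_nat)

lemma pdv_I: "pint p s \<Longrightarrow> q = of_nat p ^ k * s \<Longrightarrow> pdv p k q"
  unfolding pdv_def by blast

lemma pdv_0: "pdv p k 0" using pdv_I[OF pint_0] by simp

lemma pdv_add: "prime p \<Longrightarrow> pdv p k x \<Longrightarrow> pdv p k y \<Longrightarrow> pdv p k (x + y)"
proof -
  assume a: "prime p" "pdv p k x" "pdv p k y"
  then obtain s1 s2 where "pint p s1" "x = of_nat p ^ k * s1" "pint p s2" "y = of_nat p ^ k * s2"
    unfolding pdv_def by blast
  then show ?thesis using a(1) by (intro pdv_I[of p "s1+s2"]) (auto simp: pint_add distrib_left)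
qed

lemma pdv_uminus: "pdv p k x \<Longrightarrow> pdv p k (- x)"
proof -
  assume a: "pdv p k x"
  then obtain s1 where "pint p s1" "x = of_nat p ^ k * s1" unfolding pdv_def by blast
  then show ?thesis by (intro pdv_I[of p "-s1"]) (auto simp: pint_uminus)
qed

lemma pdv_diff: "prime p \<Longrightarrow> pdv p k x \<Longrightarrow> pdv p k y \<Longrightarrow> pdv p k (x - y)"
  using pdv_add[of p k x "-y"] pdv_uminus[of p k y] by simp

lemma pdv_mult: "prime p \<Longrightarrow> pdv p k x \<Longrightarrow> pint p y \<Longrightarrow> pdv p k (x * y)"
proof -
  assume a: "prime p" "pdv p k x" "pint p y"
  then obtain s1 where "pint p s1" "x = of_nat p ^ k * s1" unfolding pdv_def by blast
  then show ?thesis using a by (intro pdv_I[of p "s1*y"]) (auto simp: pint_mult)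
qed

lemma pdv_mult': "prime p \<Longrightarrow> pdv p k x \<Longrightarrow> pint p y \<Longrightarrow> pdv p k (y * x)"
  using pdv_mult[of p k x y] by (simp add: mult.commute)

lemma pdv_div: "prime p \<Longrightarrow> pdv p k x \<Longrightarrow> coprime e (int p) \<Longrightarrow> pdv p k (x / of_int e)"
proof -
  assume a: "prime p" "pdv p k x" "coprime e (int p)"
  then obtain s1 where "pint p s1" "x = of_nat p ^ k * s1" unfolding pdv_def by blast
  then show ?thesis using a by (intro pdv_I[of p "s1 / of_int e"]) (auto simp: pint_div)
qed

lemma pdv_div_nat: "prime p \<Longrightarrow> pdv p k x \<Longrightarrow> \<not> p dvd n \<Longrightarrow> pdv p k (x / of_nat n)"
proof -
  assume a: "prime p" "pdv p k x" "\<not> p dvd n"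
  then obtain s1 where "pint p s1" "x = of_nat p ^ k * s1" unfolding pdv_def by blast
  then show ?thesis using a by (intro pdv_I[of p "s1 / of_nat n"]) (auto simp: pint_div_nat)
qed

lemma pdv_sum: "prime p \<Longrightarrow> (\<And>i. i \<in> A \<Longrightarrow> pdv p k (f i)) \<Longrightarrow> pdv p k (sum f A)"
proof (induction A rule: infinite_finite_induct)
  case (infinite A) then show ?case by (simp add: pdv_0)
next
  case empty then show ?case by (simp add: pdv_0)
next
  case (insert x F) then show ?case by (simp add: pdv_add)
qed

lemma pdv_pint: "prime p \<Longrightarrow> pdv p k x \<Longrightarrow> pint p x"
proof -
  assume a: "prime p" "pdv p k x"
  then obtain s1 where s: "pint p s1" "x = of_nat p ^ k * s1" unfolding pdv_def by blast
  have "pint p (of_nat (p ^ k))" by (rule pint_nat)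
  then show ?thesis using s a(1) pint_mult by (metis of_nat_power)
qed

lemma pdv_Suc: "pdv p k x \<Longrightarrow> pdv p (Suc k) (of_nat p * x)"
proof -
  assume a: "pdv p k x"
  then obtain s1 where s: "pint p s1" "x = of_nat p ^ k * s1" unfolding pdv_def by blast
  then show ?thesis by (intro pdv_I[of p s1]) auto
qed

lemma pdv_rat_cong:
  assumes "prime p" "pdv p 2 (a - b)" shows "rat_cong a b (int p ^ 2)"
proof -
  obtain s where s: "pint p s" "a - b = of_nat p ^ 2 * s" using assms(2) pdv_def by auto
  obtain c d where cd: "coprime d (int p)" "s = of_int c / of_int d" using s(1) pint_def by auto
  have d0: "d \<noteq> 0" using coprime_nz assms(1) cd by auto
  obtain n e where ne: "quotient_of (a - b) = (n, e)" by (cases "quotient_of (a-b)") auto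
  have e0: "e > 0" using quotient_of_denom_pos[OF ne] .
  have cop: "coprime n e" using quotient_of_coprime[OF ne] .
  have "of_int n / of_int e = (of_int (int p ^ 2 * c) / of_int d :: rat)"
    using quotient_of_div[OF ne] s(2) cd by simp
  then have "(of_int (n * d) :: rat) = of_int (int p ^ 2 * c * e)"
    using d0 e0 by (simp add: field_simps)
  then have eq: "n * d = int p ^ 2 * c * e" by (simp only: of_int_eq_iff)
  have "e dvd n * d" using eq by simp
  then have "e dvd d" using cop by (simp add: coprime_commute coprime_dvd_mult_right_iff)
  then have ce: "coprime e (int p)" using cd(1) coprime_imp_coprime dvd_trans by blast
  have "int p ^ 2 dvd n * d" using eq by simp
  moreover have "coprime (int p ^ 2) d" using cd(1) by (simp add: coprime_commute)
  ultimately have "int p ^ 2 dvd n" by (simp add: coprime_dvd_mult_left_iff)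
  moreover have "coprime e (int p ^ 2)" using ce by simp
  ultimately show ?thesis unfolding rat_cong_def ne by simp
qed

definition Tf :: "rat \<Rightarrow> nat \<Rightarrow> rat" where
  "Tf x n = pochhammer x n * pochhammer (1 - x) n / (fact n)^2"
definition Uf :: "rat \<Rightarrow> rat \<Rightarrow> nat \<Rightarrow> rat" where
  "Uf x t j = pochhammer (x + t) j * pochhammer (1 - x + t) j / (pochhammer (1 + t) j)^2"
definition Hf :: "nat \<Rightarrow> rat" where
  "Hf n = (\<Sum>k=1..n. 1 / of_nat k)"
definition Cf :: "rat \<Rightarrow> nat \<Rightarrow> rat" where
  "Cf x j = (\<Sum>i<j. Tf x i / of_nat (j - i))"
definition Df :: "rat \<Rightarrow> nat \<Rightarrow> rat" where
  "Df x j = Cf x j - 2 * Tf x j * Hf j"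
definition qf :: "rat \<Rightarrow> nat \<Rightarrow> rat" where
  "qf x j = (x + of_nat j) * (1 - x + of_nat j)"

lemma T_0: "Tf x 0 = 1" by (simp add: Tf_def)

lemma T_Suc': "Tf x (Suc j) = qf x j * Tf x j / (of_nat (Suc j))^2"
proof -
  have f: "(fact j :: rat) \<noteq> 0" by simp
  have s: "(of_nat (Suc j) :: rat) \<noteq> 0" by (simp del: of_nat_Suc)
  have "Tf x (Suc j) = (pochhammer x j * (x + of_nat j)) * (pochhammer (1-x) j * (1 - x + of_nat j))
          / (fact j * of_nat (Suc j))^2"
    unfolding Tf_def pochhammer_Suc fact_Suc by (simp add: mult.commute del: of_nat_Suc)
  also have "\<dots> = qf x j * Tf x j / (of_nat (Suc j))^2"
    unfolding Tf_def qf_def using f s by (simp add: power_mult_distrib del: of_nat_Suc)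
  finally show ?thesis .
qed

lemma T_Suc: "(of_nat (Suc j))^2 * Tf x (Suc j) = qf x j * Tf x j"
  unfolding T_Suc' by (simp del: of_nat_Suc)

lemma H_Suc: "Hf (Suc j) = Hf j + 1 / of_nat (Suc j)"
  unfolding Hf_def by simp

lemma H_0: "Hf 0 = 0" unfolding Hf_def by simp

lemma aux_sq: assumes "(a::rat) - b \<noteq> 0" shows "a^2 * (T/(a-b)) - b^2*T/(a-b) = (a+b)*T"
proof -
  have "a^2 * (T/(a-b)) - b^2*T/(a-b) = ((a-b)*((a+b)*T))/(a-b)"
    by (simp add: diff_divide_distrib power2_eq_square algebra_simps)
  also have "\<dots> = (a+b)*T" using assms by simp
  finally show ?thesis .
qed

lemma C_rec: "(of_nat (Suc j))^2 * Cf x (Suc j) = qf x j * Cf x j + (2 * of_nat j + 1) * Tf x j"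
proof -
  have q: "qf x j * Tf x i = (of_nat j - of_nat i) * (of_nat j + of_nat i + 1) * Tf x i
             + (of_nat (Suc i))^2 * Tf x (Suc i)" for i
    unfolding T_Suc qf_def by (simp add: algebra_simps power2_eq_square)
  have "qf x j * Cf x j = (\<Sum>i<j. qf x j * Tf x i / of_nat (j - i))"
    unfolding Cf_def by (simp add: sum_distrib_left)
  also have "\<dots> = (\<Sum>i<j. (of_nat j + of_nat i + 1) * Tf x i
        + (of_nat (Suc i))^2 * Tf x (Suc i) / of_nat (j - i))"
  proof (rule sum.cong[OF refl])
    fix i assume "i \<in> {..<j}"
    then have ij: "i < j" by simp
    then have "(of_nat (j - i) :: rat) = of_nat j - of_nat i" by simp
    moreover have "(of_nat j - of_nat i :: rat) \<noteq> 0" using ij by simp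
    ultimately show "qf x j * Tf x i / of_nat (j - i) = (of_nat j + of_nat i + 1) * Tf x i
        + (of_nat (Suc i))^2 * Tf x (Suc i) / of_nat (j - i)"
      unfolding q by (simp add: field_simps)
  qed
  also have "\<dots> = (\<Sum>i<j. (of_nat j + of_nat i + 1) * Tf x i)
        + (\<Sum>i<j. (of_nat (Suc i))^2 * Tf x (Suc i) / of_nat (Suc j - Suc i))"
    by (simp add: sum.distrib)
  also have "(\<Sum>i<j. (of_nat (Suc i))^2 * Tf x (Suc i) / of_nat (Suc j - Suc i))
      = (\<Sum>i<Suc j. (of_nat i)^2 * Tf x i / of_nat (Suc j - i))"
    by (subst sum.lessThan_Suc_shift) simp
  finally have A: "qf x j * Cf x j = (\<Sum>i<j. (of_nat j + of_nat i + 1) * Tf x i)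
       + (\<Sum>i<Suc j. (of_nat i)^2 * Tf x i / of_nat (Suc j - i))" .
  have "(of_nat (Suc j))^2 * Cf x (Suc j) - (\<Sum>i<Suc j. (of_nat i)^2 * Tf x i / of_nat (Suc j - i))
      = (\<Sum>i<Suc j. (of_nat (Suc j) + of_nat i) * Tf x i)"
    unfolding Cf_def sum_distrib_left sum_subtractf[symmetric]
  proof (rule sum.cong[OF refl])
    fix i assume "i \<in> {..<Suc j}"
    then have ij: "i < Suc j" by simp
    then have e: "(of_nat (Suc j - i) :: rat) = of_nat (Suc j) - of_nat i" by (simp only: of_nat_diff)
    have nz: "(of_nat (Suc j) - of_nat i :: rat) \<noteq> 0" using ij by simp
    show "(of_nat (Suc j))^2 * (Tf x i / of_nat (Suc j - i)) - (of_nat i)^2 * Tf x i / of_nat (Suc j - i)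
        = (of_nat (Suc j) + of_nat i) * Tf x i"
      unfolding e by (rule aux_sq[OF nz])
  qed
  also have "\<dots> = (\<Sum>i<j. (of_nat j + of_nat i + 1) * Tf x i) + (2 * of_nat j + 1) * Tf x j"
    by (simp add: algebra_simps)
  finally show ?thesis using A by (simp add: algebra_simps)
qed

lemma D_rec: "(of_nat (Suc j))^2 * Df x (Suc j)
   = qf x j * Df x j + (2 * of_nat j + 1) * Tf x j - 2 * of_nat (Suc j) * Tf x (Suc j)"
proof -
  define s :: rat where "s = of_nat (Suc j)"
  have nz: "s \<noteq> 0" unfolding s_def by (simp del: of_nat_Suc)
  have e1: "s^2 * Df x (Suc j) = s^2 * Cf x (Suc j) - 2 * (s^2 * Tf x (Suc j)) * Hf j - 2 * s * Tf x (Suc j)"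
    unfolding Df_def H_Suc s_def[symmetric] using nz by (simp add: field_simps power2_eq_square)
  also have "\<dots> = qf x j * Cf x j + (2 * of_nat j + 1) * Tf x j - 2 * (qf x j * Tf x j) * Hf j - 2 * s * Tf x (Suc j)"
    unfolding s_def C_rec T_Suc by simp
  also have "\<dots> = qf x j * Df x j + (2 * of_nat j + 1) * Tf x j - 2 * s * Tf x (Suc j)"
    unfolding Df_def by (simp add: algebra_simps)
  finally show ?thesis unfolding s_def .
qed

lemma U_0: "Uf x t 0 = 1" by (simp add: Uf_def)

lemma U_Suc: assumes "t \<ge> 0"
  shows "Uf x t (Suc j) = Uf x t j * ((x + t + of_nat j) * (1 - x + t + of_nat j)) / (of_nat (Suc j) + t)^2"
proof -
  have "pochhammer (1 + t) j \<noteq> 0" using assms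
    by (auto simp: pochhammer_eq_0_iff)
  moreover have "of_nat (Suc j) + t \<noteq> 0" using assms by (metis add_pos_nonneg of_nat_0_less_iff zero_less_Suc less_irrefl)
  moreover have "1 + t + of_nat j = of_nat (Suc j) + t" by simp
  ultimately show ?thesis
    unfolding Uf_def pochhammer_Suc by (simp add: power_mult_distrib ac_simps)
qed

lemma not_dvd_small: "prime p \<Longrightarrow> 0 < k \<Longrightarrow> k < p \<Longrightarrow> \<not> (p::nat) dvd k"
  by (meson dvd_imp_le leD)

lemma pint_T: assumes p: "prime p" and x: "pint p x" and j: "j < p" shows "pint p (Tf x j)"
proof -
  have nd0: "\<not> p dvd fact j" using prime_dvd_fact_iff[OF p] j by simp
  have nd: "\<not> p dvd (fact j)^2"
    using nd0 prime_dvd_power[OF p] by blast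
  have "pint p (pochhammer x j * pochhammer (1 - x) j)"
    using p x by (intro pint_mult pint_poch pint_diff pint_1) auto
  then have "pint p (pochhammer x j * pochhammer (1 - x) j / of_nat ((fact j)^2))"
    using pint_div_nat[OF p _ nd] by blast
  then show ?thesis unfolding Tf_def by (simp add: of_nat_fact)
qed

lemma pint_H: assumes p: "prime p" and j: "j < p" shows "pint p (Hf j)"
  unfolding Hf_def
proof (rule pint_sum[OF p])
  fix i assume "i \<in> {1..j}"
  then have "0 < i" "i < p" using j by auto
  then show "pint p (1 / of_nat i)" using pint_inv_nat[OF p] not_dvd_small[OF p] by blast
qed

lemma pint_C: assumes p: "prime p" and x: "pint p x" and j: "j < p" shows "pint p (Cf x j)"
  unfolding Cf_def
proof (rule pint_sum[OF p])
  fix i assume "i \<in> {..<j}"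
  then have "0 < j - i" "j - i < p" "i < p" using j by auto
  then show "pint p (Tf x i / of_nat (j - i))"
    using pint_div_nat[OF p pint_T[OF p x]] not_dvd_small[OF p] by blast
qed

lemma pint_D: assumes p: "prime p" and x: "pint p x" and j: "j < p" shows "pint p (Df x j)"
  unfolding Df_def using p x j
  by (intro pint_diff pint_mult pint_C pint_T pint_H pint_nat) (auto simp: pint_nat[of p 2, simplified])

lemma key_alg:
  fixes E T D t q s T1 D1 :: rat
  assumes "s + t \<noteq> 0" "s^2 * T1 = q*T" "s^2*D1 = q*D + (2*s-1)*T - 2*s*T1"
  shows "(E+T+t*D)*(q + (2*s-1)*t + t^2)/(s+t)^2 - T1 - t*D1
     = (E*(q + (2*s-1)*t + t^2) + t^2*(T + (2*s-1)*D + t*D - T1 - 2*s*D1 - t*D1))/(s+t)^2"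
proof -
  have "(E+T+t*D)*(q + (2*s-1)*t + t^2) - (T1 + t*D1)*(s+t)^2
     = E*(q + (2*s-1)*t + t^2) + t^2*(T + (2*s-1)*D + t*D - T1 - 2*s*D1 - t*D1)
       + (q*T - s^2*T1) + t*(q*D + (2*s-1)*T - 2*s*T1 - s^2*D1)"
    by (simp add: algebra_simps power2_eq_square)
  also have "\<dots> = E*(q + (2*s-1)*t + t^2) + t^2*(T + (2*s-1)*D + t*D - T1 - 2*s*D1 - t*D1)"
    using assms(2,3) by simp
  finally have e: "(E+T+t*D)*(q + (2*s-1)*t + t^2) - (T1 + t*D1)*(s+t)^2
     = E*(q + (2*s-1)*t + t^2) + t^2*(T + (2*s-1)*D + t*D - T1 - 2*s*D1 - t*D1)" .
  have s2: "(s+t)^2 \<noteq> 0" using assms(1) by simp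
  show ?thesis
    unfolding e[symmetric] using s2 by (simp add: field_simps)
qed

lemma E_lemma:
  assumes p: "prime p" and x: "pint p x" and t: "t = of_nat (a * p)"
  shows "j < p \<Longrightarrow> pdv p 2 (Uf x t j - Tf x j - t * Df x j)"
proof (induction j)
  case 0
  then show ?case by (simp add: U_0 T_0 Df_def Cf_def H_0 pdv_0)
next
  case (Suc j)
  then have jp: "j < p" by simp
  have IH: "pdv p 2 (Uf x t j - Tf x j - t * Df x j)" using Suc jp by simp
  define E where "E = Uf x t j - Tf x j - t * Df x j"
  define s :: rat where "s = of_nat (Suc j)"
  define Q where "Q = qf x j + (2*s-1)*t + t^2"
  define R where "R = Tf x j + (2*s-1)*Df x j + t*Df x j - Tf x (Suc j) - 2*s*Df x (Suc j) - t*Df x (Suc j)"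
  have t0: "t \<ge> 0" using t by simp
  have st: "s + t = of_nat (Suc j + a * p)" unfolding s_def t by simp
  have ndv: "\<not> p dvd (Suc j + a * p)"
  proof
    assume "p dvd Suc j + a * p"
    then have "p dvd Suc j" using dvd_add_left_iff[of p "a*p" "Suc j"] by simp
    then show False using not_dvd_small[OF p, of "Suc j"] Suc by simp
  qed
  then have ndv2: "\<not> p dvd (Suc j + a * p)^2" using prime_dvd_power[OF p] by blast
  have st0: "s + t \<noteq> 0" unfolding st using ndv by (metis dvd_0_right of_nat_eq_0_iff)
  have QQ: "(x + t + of_nat j) * (1 - x + t + of_nat j) = Q"
    unfolding Q_def qf_def s_def by (simp add: algebra_simps power2_eq_square)
  have UQ: "Uf x t (Suc j) = (E + Tf x j + t * Df x j) * Q / (s + t)^2"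
    unfolding U_Suc[OF t0] QQ E_def s_def by simp
  have "Uf x t (Suc j) - Tf x (Suc j) - t * Df x (Suc j) = (E * Q + t^2 * R) / (s+t)^2"
    unfolding UQ Q_def R_def
  proof (rule key_alg[OF st0])
    show "s^2 * Tf x (Suc j) = qf x j * Tf x j" unfolding s_def by (rule T_Suc)
    show "s\<^sup>2 * Df x (Suc j) = qf x j * Df x j + (2 * s - 1) * Tf x j - 2 * s * Tf x (Suc j)"
      unfolding s_def D_rec by simp
  qed
  also have "\<dots> = (E * Q + t^2 * R) / of_nat ((Suc j + a * p)^2)"
    unfolding st by simp
  finally have eq: "Uf x t (Suc j) - Tf x (Suc j) - t * Df x (Suc j)
     = (E * Q + t^2 * R) / of_nat ((Suc j + a * p)^2)" .
  have pQ: "pint p Q" unfolding Q_def qf_def s_def t using p x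
    by (intro pint_add pint_mult pint_diff pint_pow pint_nat pint_1) (auto simp: pint_nat[of p 2, simplified])
  have pR: "pint p R" unfolding R_def s_def t using p x Suc jp
    by (intro pint_add pint_mult pint_diff pint_pow pint_nat pint_1 pint_T pint_D)
       (auto simp: pint_nat[of p 2, simplified])
  have "pdv p 2 (E * Q)" using IH pQ p unfolding E_def by (intro pdv_mult) auto
  moreover have "pdv p 2 (t^2 * R)"
    by (rule pdv_I[of p "of_nat (a^2) * R"]) (use p pR pint_mult[OF p pint_nat[of p "a^2"] pR] in \<open>auto simp: t power_mult_distrib\<close>)
  ultimately have "pdv p 2 (E * Q + t^2 * R)" using p by (intro pdv_add)
  then show ?case unfolding eq using p ndv2 by (intro pdv_div_nat)
qed

definition Wf :: "nat \<Rightarrow> nat \<Rightarrow> rat" where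
  "Wf p i = (\<Sum>k=1..i. 1 / (of_nat k * of_nat (p - k)))"

lemma aux_key: fixes a b :: rat assumes "a - b \<noteq> 0" "b \<noteq> 0"
  shows "- 1 / (a - b) + 1 / b = 2 / b - a * (1 / (b * (a - b)))"
proof -
  have "- 1 / (a - b) + 1 / b = (a - 2*b) / (b * (a - b))"
    using assms by (simp add: field_simps)
  also have "\<dots> = 2 / b - a * (1 / (b * (a - b)))"
    using assms by (simp add: field_simps)
  finally show ?thesis .
qed

lemma G_lemma:
  assumes "i < p"
  shows "Hf (p - 1 - i) - Hf (p - 1) + Hf i = 2 * Hf i - of_nat p * Wf p i"
  using assms
proof (induction i)
  case 0 then show ?case by (simp add: H_0 Wf_def)
next
  case (Suc i)
  then have ip: "Suc i < p" by simp
  define m where "m = p - 1 - Suc i"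
  have pm: "p - 1 - i = Suc m" unfolding m_def using ip by simp
  have HS: "Hf (p - 1 - i) = Hf m + 1 / of_nat (Suc m)" unfolding pm H_Suc ..
  have km: "(of_nat (Suc m) :: rat) = of_nat p - of_nat (Suc i)" unfolding m_def using ip
    by (simp add: of_nat_diff)
  have km2: "(of_nat (p - Suc i) :: rat) = of_nat p - of_nat (Suc i)" using ip by (simp add: of_nat_diff)
  have WS: "Wf p (Suc i) = Wf p i + 1 / (of_nat (Suc i) * of_nat (p - Suc i))"
    unfolding Wf_def by simp
  have IH: "Hf (p - 1 - i) - Hf (p - 1) + Hf i = 2 * Hf i - of_nat p * Wf p i" using Suc ip by simp
  have nz1: "(of_nat p - of_nat (Suc i) :: rat) \<noteq> 0" using ip by simp
  have nz2: "(of_nat (Suc i) :: rat) \<noteq> 0" by (simp del: of_nat_Suc)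
  have key: "- 1 / (of_nat p - of_nat (Suc i)) + 1 / of_nat (Suc i)
     = 2 / of_nat (Suc i) - of_nat p * (1 / (of_nat (Suc i) * (of_nat p - of_nat (Suc i))) :: rat)"
    by (rule aux_key[OF nz1 nz2])
  have "Hf (p - 1 - Suc i) - Hf (p - 1) + Hf (Suc i)
      = (Hf (p - 1 - i) - Hf (p - 1) + Hf i) - 1 / of_nat (Suc m) + 1 / of_nat (Suc i)"
    unfolding HS H_Suc[of i] m_def by simp
  also have "\<dots> = 2 * Hf i - of_nat p * Wf p i + (- 1 / (of_nat p - of_nat (Suc i)) + 1 / of_nat (Suc i))"
    unfolding IH km by simp
  also have "\<dots> = 2 * Hf (Suc i) - of_nat p * Wf p (Suc i)"
    unfolding key WS H_Suc[of i] km2 by (simp add: algebra_simps)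
  finally show ?case .
qed

lemma sum_shift_H: "(\<Sum>j\<in>{i<..<p}. 1 / (of_nat (j - i) :: rat)) = Hf (p - 1 - i)"
proof (cases "i < p")
  case True
  have "(\<Sum>j\<in>{i<..<p}. 1 / (of_nat (j - i) :: rat)) = (\<Sum>k\<in>{1..p - 1 - i}. 1 / of_nat k)"
    by (rule sum.reindex_bij_witness[where i = "\<lambda>k. k + i" and j = "\<lambda>j. j - i"]) auto
  then show ?thesis unfolding Hf_def .
next
  case False
  then show ?thesis by (simp add: Hf_def)
qed

lemma sum_split_H: assumes "i < p"
  shows "(\<Sum>j\<in>{i<..<p}. 1 / (of_nat j :: rat)) = Hf (p - 1) - Hf i"
proof -
  have "{1..p-1} = {1..i} \<union> {i<..<p}" using assms by auto
  moreover have "{1..i} \<inter> {i<..<p} = {}" by auto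
  ultimately have "Hf (p - 1) = Hf i + (\<Sum>j\<in>{i<..<p}. 1 / (of_nat j :: rat))"
    unfolding Hf_def by (simp add: sum.union_disjoint)
  then show ?thesis by simp
qed

lemma V_lemma: assumes "0 < i" "i < p"
  shows "(\<Sum>j\<in>{i<..<p}. 1 / (of_nat (j - i) * of_nat j) :: rat) = (2 * Hf i - of_nat p * Wf p i) / of_nat i"
proof -
  have "(\<Sum>j\<in>{i<..<p}. 1 / (of_nat (j - i) * of_nat j) :: rat)
      = (\<Sum>j\<in>{i<..<p}. (1 / of_nat (j - i) - 1 / of_nat j) / of_nat i)"
  proof (rule sum.cong[OF refl])
    fix j assume "j \<in> {i<..<p}"
    then have ij: "i < j" by simp
    then have e: "(of_nat (j - i) :: rat) = of_nat j - of_nat i" by (simp add: of_nat_diff)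
    have "(of_nat j - of_nat i :: rat) \<noteq> 0" "(of_nat j :: rat) \<noteq> 0" "(of_nat i :: rat) \<noteq> 0"
      using ij assms by auto
    then show "1 / (of_nat (j - i) * of_nat j) = (1 / of_nat (j - i) - 1 / of_nat j) / (of_nat i :: rat)"
      unfolding e by (simp add: field_simps)
  qed
  also have "\<dots> = (Hf (p - 1 - i) - (Hf (p - 1) - Hf i)) / of_nat i"
    unfolding sum_divide_distrib[symmetric] sum_subtractf sum_shift_H sum_split_H[OF assms(2)] ..
  also have "\<dots> = (2 * Hf i - of_nat p * Wf p i) / of_nat i"
    using G_lemma[OF assms(2)] by (simp add: algebra_simps)
  finally show ?thesis .
qed

lemma pint_W: assumes p: "prime p" and i: "i < p" shows "pint p (Wf p i)"
  unfolding Wf_def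
proof (rule pint_sum[OF p])
  fix k assume "k \<in> {1..i}"
  then have k: "0 < k" "k < p" "0 < p - k" "p - k < p" using i by auto
  have "\<not> p dvd k * (p - k)"
    using k not_dvd_small[OF p] prime_dvd_mult_iff[OF p] by blast
  then have "pint p (1 / of_nat (k * (p - k)))" by (rule pint_inv_nat[OF p])
  then show "pint p (1 / (of_nat k * of_nat (p - k)))" by simp
qed

lemma sum_sq6: "6 * (\<Sum>k<Suc m. k^2) = m * (m + 1) * (2 * m + 1)"
  by (induction m) (simp_all add: algebra_simps power2_eq_square)

lemma S2_lemma:
  assumes p: "prime p" and p3: "p > 3"
  shows "pdv p 1 (\<Sum>j\<in>{0<..<p}. 1 / (of_nat j * of_nat j))"
proof -
  define A where "A = {0<..<p}"
  define g where "g j = (THE y. 0 < y \<and> y < p \<and> [j * y = 1] (mod p))" for j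
  have cp1: "coprime p 1" by simp
  have gP: "0 < g j \<and> g j < p \<and> [j * g j = 1] (mod p)" if "j \<in> A" for j
  proof -
    have "\<exists>!y. 0 < y \<and> y < p \<and> [j * y = 1] (mod p)"
      using cong_solve_unique_nontrivial[OF p cp1, of j] that unfolding A_def by auto
    then show ?thesis unfolding g_def by (rule theI')
  qed
  have inj: "inj_on g A"
  proof (rule inj_onI)
    fix j1 j2 assume j: "j1 \<in> A" "j2 \<in> A" "g j1 = g j2"
    define y where "y = g j1"
    have c1: "[j1 * y = 1] (mod p)" using gP[OF j(1)] y_def by simp
    have c2: "[j2 * y = 1] (mod p)" using gP[OF j(2)] y_def j(3) by simp
    have "[j1 * (j2 * y) = j1 * 1] (mod p)" by (intro cong_mult cong_refl c2)
    moreover have "[j2 * (j1 * y) = j2 * 1] (mod p)" by (intro cong_mult cong_refl c1)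
    moreover have "j1 * (j2 * y) = j2 * (j1 * y)" by simp
    ultimately have "[j1 = j2] (mod p)" by (metis cong_sym cong_trans mult_1_right)
    then show "j1 = j2" using j(1,2) cong_less_modulus_unique_nat unfolding A_def by auto
  qed
  have img: "g ` A = A"
    by (rule endo_inj_surj) (use gP inj in \<open>auto simp: A_def\<close>)
  have sumg: "(\<Sum>j\<in>A. (g j)^2) = (\<Sum>k\<in>A. k^2)"
    using sum.reindex[OF inj, of "\<lambda>k. k^2"] img by simp
  have "(\<Sum>k\<in>A. k^2) = (\<Sum>k<p. (k::nat)^2)"
  proof -
    have "{..<p} = insert 0 A" unfolding A_def using p3 by auto
    then show ?thesis unfolding A_def by simp
  qed
  moreover obtain m where m: "p = Suc m" using p3 by (cases p) auto
  ultimately have "6 * (\<Sum>k\<in>A. k^2) = m * (m + 1) * (2 * m + 1)" using sum_sq6 by simp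
  also have "m * (m + 1) * (2 * m + 1) = p * (m * (2 * m + 1))" using m by (simp add: algebra_simps)
  finally have "p dvd 6 * (\<Sum>k\<in>A. k^2)" by (metis dvd_triv_left)
  moreover have "\<not> p dvd 6"
  proof
    assume "p dvd 6"
    then have "p dvd 2 * 3" by simp
    then have "p dvd 2 \<or> p dvd 3" using prime_dvd_mult_iff[OF p] by blast
    then have "p \<le> 3" by (auto dest: dvd_imp_le)
    then show False using p3 by auto
  qed
  ultimately have "p dvd (\<Sum>k\<in>A. k^2)" using prime_dvd_mult_iff[OF p] by blast
  then obtain w where w: "(\<Sum>k\<in>A. k^2) = p * w" by blast
  have pd1: "pdv p 1 (\<Sum>j\<in>A. of_nat ((g j)^2))"
  proof (rule pdv_I[of p "of_nat w"])
    show "pint p (of_nat w)" by (rule pint_nat)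
    have "(\<Sum>j\<in>A. of_nat ((g j)^2)) = (of_nat (\<Sum>j\<in>A. (g j)^2) :: rat)" by simp
    also have "\<dots> = of_nat p * of_nat w" using sumg w by simp
    finally show "(\<Sum>j\<in>A. of_nat ((g j)^2)) = of_nat p ^ 1 * (of_nat w :: rat)" by simp
  qed
  have pd2: "pdv p 1 (1 / (of_nat j * of_nat j) - of_nat ((g j)^2))" if "j \<in> A" for j
  proof -
    define y where "y = g j"
    have c: "[j * y = 1] (mod p)" "0 < y" using gP[OF that] y_def by auto
    have j0: "0 < j" "j < p" using that A_def by auto
    obtain z where z: "j * y = 1 + z * p" using c(1) cong_to_1'_nat j0 c(2) by auto
    have nd: "\<not> p dvd j * j" using not_dvd_small[OF p j0] prime_dvd_mult_iff[OF p] by blast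
    have jr: "(of_nat j :: rat) \<noteq> 0" using j0 by simp
    have "1 / (of_nat j * of_nat j) - of_nat (y^2) = (1 - (of_nat (j * y))^2) / (of_nat (j * j) :: rat)"
      using jr by (simp add: field_simps power2_eq_square)
    also have "\<dots> = of_nat p * ((- of_nat z * (2 + of_nat z * of_nat p)) / of_nat (j * j))"
      unfolding z by (simp add: field_simps power2_eq_square)
    finally have e: "1 / (of_nat j * of_nat j) - of_nat (y^2) =
        of_nat p * ((- of_nat z * (2 + of_nat z * of_nat p)) / of_nat (j * j) :: rat)" .
    have "pint p ((- of_nat z * (2 + of_nat z * of_nat p)) / of_nat (j * j))"
      using p nd by (intro pint_div_nat pint_mult pint_uminus pint_add pint_nat)
         (auto simp: pint_nat[of p 2, simplified])
    then show ?thesis unfolding y_def[symmetric] e by (intro pdv_I) auto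
  qed
  have "(\<Sum>j\<in>A. 1 / (of_nat j * of_nat j) :: rat)
      = (\<Sum>j\<in>A. 1 / (of_nat j * of_nat j) - of_nat ((g j)^2)) + (\<Sum>j\<in>A. of_nat ((g j)^2))"
    by (simp add: sum_subtractf)
  moreover have "pdv p 1 \<dots>" by (rule pdv_add[OF p pdv_sum[OF p pd2] pd1])
  ultimately show ?thesis unfolding A_def by simp
qed

lemma K_lemma:
  assumes p: "prime p" and p3: "p > 3" and x: "pint p x"
  shows "pdv p 1 (\<Sum>j<p. Df x j / of_nat j)"
proof -
  define V where "V i = (\<Sum>j\<in>{i<..<p}. 1 / (of_nat (j - i) * of_nat j) :: rat)" for i
  have CC: "(\<Sum>j<p. Cf x j / of_nat j) = (\<Sum>i<p. Tf x i * V i)"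
  proof -
    have "(\<Sum>j<p. Cf x j / of_nat j)
        = (\<Sum>j\<in>{..<p}. \<Sum>i\<in>{i. i \<in> {..<p} \<and> i < j}. Tf x i * (1 / (of_nat (j - i) * of_nat j)))"
    proof (rule sum.cong[OF refl])
      fix j assume "j \<in> {..<p}"
      then have "{i. i \<in> {..<p} \<and> i < j} = {..<j}" by auto
      then show "Cf x j / of_nat j = (\<Sum>i\<in>{i. i \<in> {..<p} \<and> i < j}. Tf x i * (1 / (of_nat (j - i) * of_nat j)))"
        unfolding Cf_def sum_divide_distrib by simp
    qed
    also have "\<dots> = (\<Sum>i\<in>{..<p}. \<Sum>j\<in>{j. j \<in> {..<p} \<and> i < j}. Tf x i * (1 / (of_nat (j - i) * of_nat j)))"
      by (rule sum.swap_restrict) auto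
    also have "\<dots> = (\<Sum>i<p. Tf x i * V i)"
    proof (rule sum.cong[OF refl])
      fix i assume "i \<in> {..<p}"
      have "{j. j \<in> {..<p} \<and> i < j} = {i<..<p}" by auto
      then show "(\<Sum>j\<in>{j. j \<in> {..<p} \<and> i < j}. Tf x i * (1 / (of_nat (j - i) * of_nat j))) = Tf x i * V i"
        unfolding V_def sum_distrib_left by simp
    qed
    finally show ?thesis .
  qed
  have pt: "Tf x i * V i - 2 * (Tf x i * Hf i / of_nat i)
      = (if i = 0 then V 0 else 0) - of_nat p * (Tf x i * Wf p i / of_nat i)" if "i < p" for i
  proof (cases "i = 0")
    case True then show ?thesis by (simp add: T_0 H_0 Wf_def)
  next
    case False
    then have V: "V i = (2 * Hf i - of_nat p * Wf p i) / of_nat i" unfolding V_def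
      using V_lemma[of i p] that by simp
    show ?thesis unfolding V using False by (simp add: field_simps)
  qed
  have "(\<Sum>j<p. Df x j / of_nat j) = (\<Sum>j<p. Cf x j / of_nat j) - 2 * (\<Sum>j<p. Tf x j * Hf j / of_nat j)"
    unfolding Df_def by (simp add: diff_divide_distrib sum_subtractf sum_distrib_left mult.assoc)
  also have "\<dots> = (\<Sum>i<p. Tf x i * V i - 2 * (Tf x i * Hf i / of_nat i))"
    unfolding CC by (simp add: sum_subtractf sum_distrib_left)
  also have "\<dots> = (\<Sum>i<p. (if i = 0 then V 0 else 0) - of_nat p * (Tf x i * Wf p i / of_nat i))"
  proof (rule sum.cong[OF refl])
    fix i assume "i \<in> {..<p}"
    then show "Tf x i * V i - 2 * (Tf x i * Hf i / of_nat i)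
      = (if i = 0 then V 0 else 0) - of_nat p * (Tf x i * Wf p i / of_nat i)" by (intro pt) simp
  qed
  also have "\<dots> = V 0 - of_nat p * (\<Sum>i<p. Tf x i * Wf p i / of_nat i)"
    using p3 by (simp add: sum_subtractf sum_distrib_left)
  finally have K: "(\<Sum>j<p. Df x j / of_nat j) = V 0 - of_nat p * (\<Sum>i<p. Tf x i * Wf p i / of_nat i)" .
  have "pdv p 1 (V 0)" unfolding V_def using S2_lemma[OF p p3] by simp
  moreover have "pdv p 1 (of_nat p * (\<Sum>i<p. Tf x i * Wf p i / of_nat i))"
  proof (rule pdv_I)
    show "pint p (\<Sum>i<p. Tf x i * Wf p i / of_nat i)"
    proof (rule pint_sum[OF p])
      fix i assume i: "i \<in> {..<p}"
      show "pint p (Tf x i * Wf p i / of_nat i)"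
      proof (cases "i = 0")
        case True then show ?thesis by (simp add: pint_0)
      next
        case False
        then show ?thesis using i p x
          by (intro pint_div_nat pint_mult pint_T pint_W not_dvd_small) auto
      qed
    qed
  qed simp
  ultimately show ?thesis unfolding K using pdv_diff[OF p] by blast
qed

lemma pint_poch_fact:
  assumes p: "prime p" and m: "coprime m (int p)"
  shows "pint p (pochhammer (of_int r / of_int m) n / fact n)"
proof -
  have m0: "m \<noteq> 0" using coprime_nz p m by auto
  define A where "A = (\<Prod>i = 0..<n. r + int i * m)"
  have "pochhammer (of_int r / of_int m :: rat) n = (\<Prod>i = 0..<n. of_int (r + int i * m) / of_int m)"
    unfolding pochhammer_prod using m0 by (intro prod.cong) (auto simp: field_simps)
  also have "\<dots> = of_int A / of_int m ^ n"
    unfolding A_def by (simp add: prod_dividef)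
  finally have pA: "pochhammer (of_int r / of_int m :: rat) n = of_int A / of_int m ^ n" .
  have F0: "(fact n :: int) \<noteq> 0" by simp
  have nu: "\<not> is_unit (int p)" using p by auto
  obtain u where u: "(fact n :: int) = int p ^ multiplicity (int p) (fact n) * u" "\<not> int p dvd u"
    using multiplicity_decompose'[OF F0 nu] by blast
  define N where "N = multiplicity (int p) (fact n :: int)"
  have cmN: "coprime m (int p ^ N)" using m by simp
  obtain m' where m': "[m * m' = 1] (mod int p ^ N)" using cong_solve_coprime_int[OF cmN] by blast
  have "[A = (\<Prod>i = 0..<n. m * (r * m' + int i))] (mod int p ^ N)"
    unfolding A_def
  proof (rule cong_prod)
    fix i assume "i \<in> {0..<n}"
    have "[r * (m * m') + int i * m = r * 1 + int i * m] (mod int p ^ N)"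
      by (intro cong_add cong_mult cong_refl m')
    then show "[r + int i * m = m * (r * m' + int i)] (mod int p ^ N)"
      by (simp add: algebra_simps cong_sym)
  qed
  also have "(\<Prod>i = 0..<n. m * (r * m' + int i)) = m ^ n * pochhammer (r * m') n"
    by (simp add: pochhammer_prod prod.distrib)
  finally have cA: "[A = m ^ n * pochhammer (r * m') n] (mod int p ^ N)" .
  have "int p ^ N dvd fact n" unfolding N_def by (subst u(1)) (rule dvd_triv_left)
  also have "fact n dvd pochhammer (r * m') n" by (rule fact_dvd_pochhammer)
  finally have "int p ^ N dvd m ^ n * pochhammer (r * m') n" by simp
  then have "int p ^ N dvd A" using cA cong_dvd_iff by blast
  then obtain A' where A': "A = int p ^ N * A'" by blast
  have "(fact n :: rat) = of_int (fact n)" by simp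
  also have "\<dots> = of_int (int p ^ N * u)" using u N_def by simp
  finally have fn: "(fact n :: rat) = of_int (int p ^ N) * of_int u" by simp
  have pN0: "(of_int (int p ^ N) :: rat) \<noteq> 0" using p by (simp add: prime_gt_0_nat)
  have "pochhammer (of_int r / of_int m :: rat) n / fact n = of_int A' / of_int (m ^ n * u)"
    unfolding pA fn A' using pN0 m0 p by (simp add: field_simps prime_gt_0_nat)
  moreover have "coprime (m ^ n * u) (int p)"
  proof -
    have "prime (int p)" using p by simp
    then have "coprime (int p) u" using u(2) by (rule prime_imp_coprime)
    then show ?thesis using m by (simp add: coprime_commute)
  qed
  ultimately show ?thesis unfolding pint_def by blast
qed


lemma split_alg: fixes U T D t J :: rat assumes "J \<noteq> 0" "t + J \<noteq> 0"
  shows "(U - T)/(t+J) = (U - T - t*D)/(t+J) + t*(D/J) - t^2*(D/(J*(t+J)))"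
proof -
  have nz: "J*(t+J) \<noteq> 0" using assms by simp
  have a1: "t*(D/J) = t*D*(t+J)/(J*(t+J))" using assms by simp
  have a2: "t^2*(D/(J*(t+J))) = t*D*t/(J*(t+J))" by (simp add: power2_eq_square)
  have "t*(D/J) - t^2*(D/(J*(t+J))) = (t*D*(t+J) - t*D*t)/(J*(t+J))"
    unfolding a1 a2 by (rule diff_divide_distrib[symmetric])
  also have "t*D*(t+J) - t*D*t = J*(t*D)" by (simp add: algebra_simps)
  also have "J*(t*D)/(J*(t+J)) = t*D/(t+J)" using assms by simp
  finally have e: "t*(D/J) - t^2*(D/(J*(t+J))) = t*D/(t+J)" .
  have "(U - T - t*D)/(t+J) + t*(D/J) - t^2*(D/(J*(t+J))) = (U - T - t*D)/(t+J) + t*D/(t+J)"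
    using e by simp
  also have "\<dots> = (U - T)/(t+J)" by (simp add: diff_divide_distrib)
  finally show ?thesis by simp
qed

lemma TU: "Tf x (n + j) = Tf x n * Uf x (of_nat n) j"
proof -
  have f0: "(fact n :: rat) \<noteq> 0" by simp
  have p0: "pochhammer (1 + of_nat n :: rat) j \<noteq> 0" by (simp add: pochhammer_eq_0_iff)
  have "(fact (n + j) :: rat) = fact n * pochhammer (1 + of_nat n) j"
    unfolding pochhammer_fact pochhammer_product' ..
  then show ?thesis
    unfolding Tf_def Uf_def pochhammer_product' using f0 p0
    by (simp add: power_mult_distrib)
qed

lemma pint_Tf_gen:
  assumes p: "prime p" and m: "coprime m (int p)" and x: "x = of_int r / of_int m"
  shows "pint p (Tf x n)"
proof -
  have m0: "m \<noteq> 0" using coprime_nz p m by auto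
  have x1: "1 - x = of_int (m - r) / of_int m" using x m0 by (simp add: field_simps)
  have A: "pint p (pochhammer x n / fact n)" unfolding x by (rule pint_poch_fact[OF p m])
  have B: "pint p (pochhammer (1 - x) n / fact n)" unfolding x1 by (rule pint_poch_fact[OF p m])
  have "Tf x n = (pochhammer x n / fact n) * (pochhammer (1 - x) n / fact n)"
    unfolding Tf_def by (simp add: power2_eq_square)
  then show ?thesis using pint_mult[OF p A B] by simp
qed

theorem lemma2p3:
  fixes p :: nat and r m :: int and a :: nat and x :: rat
  assumes "prime p" and "p > 3"
    and "0 < r" and "r < m" and "coprime m (int p)"
    and "x = of_int r / of_int m"
  shows "rat_cong
     (\<Sum>k = a*p+1 .. a*p+p-1.
        pochhammer x k * pochhammer (1 - x) k / (pochhammer 1 k)^2 * (1 / of_nat k))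
     (pochhammer x (a*p) * pochhammer (1 - x) (a*p) / (pochhammer 1 (a*p))^2 *
      (\<Sum>k = 1 .. p-1.
        pochhammer x k * pochhammer (1 - x) k / (pochhammer 1 k)^2 * (1 / of_nat (a*p + k))))
     (int p ^ 2)"
proof -
  note p = assms(1) and p3 = assms(2)
  define t :: rat where "t = of_nat (a * p)"
  have px: "pint p x" unfolding assms(6) pint_def using assms(5) by blast
  have TT: "pochhammer x k * pochhammer (1 - x) k / (pochhammer 1 k)^2 = Tf x k" for k
    unfolding Tf_def pochhammer_fact ..
  have tj: "of_nat (a * p + j) = t + of_nat j" for j unfolding t_def by simp
  have set: "{a*p+1 .. a*p+p-1} = {1 + a*p .. (p - 1) + a*p}" using p3 by auto
  have L: "(\<Sum>k = a*p+1 .. a*p+p-1.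
        pochhammer x k * pochhammer (1 - x) k / (pochhammer 1 k)^2 * (1 / of_nat k))
      = Tf x (a*p) * (\<Sum>j = 1 .. p-1. Uf x t j / (t + of_nat j))"
  proof -
    have "(\<Sum>k = a*p+1 .. a*p+p-1.
        pochhammer x k * pochhammer (1 - x) k / (pochhammer 1 k)^2 * (1 / of_nat k))
       = (\<Sum>k = a*p+1 .. a*p+p-1. Tf x k * (1 / of_nat k))" unfolding TT ..
    also have "\<dots> = (\<Sum>j = 1 .. p-1. Tf x (j + a*p) * (1 / of_nat (j + a*p)))"
      unfolding set sum.shift_bounds_cl_nat_ivl ..
    also have "\<dots> = (\<Sum>j = 1 .. p-1. Tf x (a*p) * (Uf x t j / (t + of_nat j)))"
    proof (rule sum.cong[OF refl])
      fix j
      have "Tf x (j + a*p) = Tf x (a*p) * Uf x t j" unfolding t_def using TU[of x "a*p" j]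
        by (simp add: add.commute)
      moreover have "(of_nat (j + a*p) :: rat) = t + of_nat j" unfolding t_def by simp
      ultimately show "Tf x (j + a*p) * (1 / of_nat (j + a*p)) = Tf x (a*p) * (Uf x t j / (t + of_nat j))"
        by simp
    qed
    finally show ?thesis by (simp add: sum_distrib_left)
  qed
  have R: "pochhammer x (a*p) * pochhammer (1 - x) (a*p) / (pochhammer 1 (a*p))^2 *
      (\<Sum>k = 1 .. p-1.
        pochhammer x k * pochhammer (1 - x) k / (pochhammer 1 k)^2 * (1 / of_nat (a*p + k)))
      = Tf x (a*p) * (\<Sum>j = 1 .. p-1. Tf x j / (t + of_nat j))"
    unfolding TT tj by simp
  define E where "E j = Uf x t j - Tf x j - t * Df x j" for j
  have split: "(Uf x t j - Tf x j) / (t + of_nat j)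
      = E j / of_nat (j + a*p) + t * (Df x j / of_nat j) - t^2 * (Df x j / (of_nat j * (t + of_nat j)))"
    if "j \<in> {1..p-1}" for j
  proof -
    have j0: "(of_nat j :: rat) \<noteq> 0" using that by simp
    have e: "(of_nat (j + a*p) :: rat) = t + of_nat j" unfolding t_def by simp
    have "j + a*p \<noteq> 0" using that by simp
    then have "(of_nat (j + a*p) :: rat) \<noteq> 0" by (simp only: of_nat_eq_0_iff not_False_eq_True)
    then have tj0: "t + of_nat j \<noteq> 0" unfolding e .
    note e
    show ?thesis unfolding E_def e by (rule split_alg[OF j0 tj0])
  qed
  have diff: "Tf x (a*p) * (\<Sum>j = 1 .. p-1. Uf x t j / (t + of_nat j))
      - Tf x (a*p) * (\<Sum>j = 1 .. p-1. Tf x j / (t + of_nat j))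
    = Tf x (a*p) * ((\<Sum>j = 1 .. p-1. E j / of_nat (j + a*p))
        + t * (\<Sum>j = 1 .. p-1. Df x j / of_nat j)
        - t^2 * (\<Sum>j = 1 .. p-1. Df x j / (of_nat j * (t + of_nat j))))"
  proof -
    have "(\<Sum>j = 1 .. p-1. Uf x t j / (t + of_nat j)) - (\<Sum>j = 1 .. p-1. Tf x j / (t + of_nat j))
        = (\<Sum>j = 1 .. p-1. (Uf x t j - Tf x j) / (t + of_nat j))"
      by (simp add: sum_subtractf diff_divide_distrib)
    also have "\<dots> = (\<Sum>j = 1 .. p-1. E j / of_nat (j + a*p) + t * (Df x j / of_nat j)
         - t^2 * (Df x j / (of_nat j * (t + of_nat j))))"
      by (rule sum.cong[OF refl]) (rule split)
    also have "\<dots> = (\<Sum>j = 1 .. p-1. E j / of_nat (j + a*p))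
        + t * (\<Sum>j = 1 .. p-1. Df x j / of_nat j)
        - t^2 * (\<Sum>j = 1 .. p-1. Df x j / (of_nat j * (t + of_nat j)))"
      by (simp add: sum.distrib sum_subtractf sum_distrib_left)
    finally show ?thesis by (simp add: right_diff_distrib[symmetric])
  qed
  have pE: "pdv p 2 (\<Sum>j = 1 .. p-1. E j / of_nat (j + a*p))"
  proof (rule pdv_sum[OF p])
    fix j assume j: "j \<in> {1..p-1}"
    then have jp: "j < p" "0 < j" using p3 by auto
    have "\<not> p dvd j + a * p"
    proof
      assume "p dvd j + a * p"
      then have "p dvd j" using dvd_add_left_iff[of p "a*p" j] by simp
      then show False using not_dvd_small[OF p jp(2) jp(1)] by simp
    qed
    moreover have "pdv p 2 (E j)" unfolding E_def using E_lemma[OF p px t_def jp(1)] .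
    ultimately show "pdv p 2 (E j / of_nat (j + a*p))" using pdv_div_nat[OF p] by blast
  qed
  have K1: "(\<Sum>j = 1 .. p-1. Df x j / of_nat j) = (\<Sum>j<p. Df x j / of_nat j)"
  proof -
    have "{..<p} = insert 0 {1..p-1}" using p3 by auto
    then show ?thesis by simp
  qed
  obtain s where s: "pint p s" "(\<Sum>j<p. Df x j / of_nat j) = of_nat p * s"
    using K_lemma[OF p p3 px] unfolding pdv_def by auto
  have pK: "pdv p 2 (t * (\<Sum>j = 1 .. p-1. Df x j / of_nat j))"
    unfolding K1 s(2) t_def
    by (rule pdv_I[of p "of_nat a * s"]) (auto simp: pint_mult[OF p pint_nat s(1)] power2_eq_square)
  have pint3: "pint p (\<Sum>j = 1 .. p-1. Df x j / (of_nat j * (t + of_nat j)))"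
  proof (rule pint_sum[OF p])
    fix j assume j: "j \<in> {1..p-1}"
    then have jp: "j < p" "0 < j" using p3 by auto
    have "\<not> p dvd j * (j + a * p)"
    proof
      assume "p dvd j * (j + a * p)"
      then have "p dvd j \<or> p dvd j + a * p" using prime_dvd_mult_iff[OF p] by blast
      then have "p dvd j" using dvd_add_left_iff[of p "a*p" j] by auto
      then show False using not_dvd_small[OF p jp(2) jp(1)] by simp
    qed
    then have "pint p (Df x j / of_nat (j * (j + a * p)))"
      by (rule pint_div_nat[OF p pint_D[OF p px jp(1)]])
    moreover have "(of_nat (j * (j + a * p)) :: rat) = of_nat j * (t + of_nat j)"
      unfolding t_def by simp
    ultimately show "pint p (Df x j / (of_nat j * (t + of_nat j)))" by metis
  qed
  have p3t: "pdv p 2 (t^2 * (\<Sum>j = 1 .. p-1. Df x j / (of_nat j * (t + of_nat j))))"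
  proof (rule pdv_I[of p "of_nat (a^2) * (\<Sum>j = 1 .. p-1. Df x j / (of_nat j * (t + of_nat j)))"])
    show "pint p (of_nat (a^2) * (\<Sum>j = 1 .. p-1. Df x j / (of_nat j * (t + of_nat j))))"
      by (rule pint_mult[OF p pint_nat pint3])
    show "t^2 * (\<Sum>j = 1 .. p-1. Df x j / (of_nat j * (t + of_nat j)))
      = of_nat p ^ 2 * (of_nat (a^2) * (\<Sum>j = 1 .. p-1. Df x j / (of_nat j * (t + of_nat j))))"
      by (simp only: t_def of_nat_mult of_nat_power power_mult_distrib mult_ac)
  qed
  have all: "pdv p 2 (Tf x (a*p) * ((\<Sum>j = 1 .. p-1. E j / of_nat (j + a*p))
        + t * (\<Sum>j = 1 .. p-1. Df x j / of_nat j)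
        - t^2 * (\<Sum>j = 1 .. p-1. Df x j / (of_nat j * (t + of_nat j)))))"
    by (rule pdv_mult'[OF p pdv_diff[OF p pdv_add[OF p pE pK] p3t] pint_Tf_gen[OF p assms(5,6)]])
  show ?thesis
    by (rule pdv_rat_cong[OF p]) (unfold L R diff, rule all)
qed

end
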